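(* Let $K_\infty=s_1s_2s_3\dots$ be the fixed point beginning with $1$ of the substitution $1\mapsto10$, $0\mapsto11$, let $t_k=\sum_{i=1}^k s_i\pmod 2$, $\epsilon_k=1-2t_k=(-1)^{\sum_{i=1}^k s_i}$, and $\tau_\infty=\sum_{k\ge1}t_k2^{-k}$. Let $\Xi(z)=\prod_{n=0}^\infty(1-z^{2^n})$ for $|z|<1$. Then $\Xi(z)=1+\sum_{k\ge1}\epsilon_kz^k$ as power series, $\Xi(z)=(1-z)\Xi(z^2)$, and $\tau_\infty=1-\frac12\,\Xi(1/2)$. *)

theory Defs
  imports "HOL-Analysis.Analysis"
begin

definition sigma :: "nat \<Rightarrow> nat list" where
  "sigma a = (if a = 1 then [1, 0] else [1, 1])"

definition subst_word :: "nat list \<Rightarrow> nat list" where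
  "subst_word xs = concat (map sigma xs)"

text \<open>The fixed point K_infinity = s_1 s_2 s_3 ... beginning with 1, obtained as the limit of
  the iterates sigma^n(1) (each a prefix of the next, of length 2^n); indexed from 1.\<close>
definition Kinf :: "nat \<Rightarrow> nat" where
  "Kinf k = (subst_word ^^ k) [1] ! (k - 1)"

definition tseq :: "nat \<Rightarrow> nat" where
  "tseq k = (\<Sum>i=1..k. Kinf i) mod 2"

definition epsseq :: "nat \<Rightarrow> int" where
  "epsseq k = 1 - 2 * int (tseq k)"

definition tau_inf :: real where
  "tau_inf = (\<Sum>k. real (tseq (Suc k)) / 2 ^ (Suc k))"

definition Xi :: "complex \<Rightarrow> complex" where
  "Xi z = (\<Prod>n. 1 - z ^ (2 ^ n))"

end

theory Submission
  imports Defs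
begin

fun tm :: "nat \<Rightarrow> nat" where
  "tm n = (if n = 0 then 0 else (tm (n div 2) + n mod 2) mod 2)"

declare tm.simps[simp del]

lemma tm0[simp]: "tm 0 = 0" by (simp add: tm.simps)
lemma tm_le1: "tm n \<le> 1"
  by (subst tm.simps) auto
lemma tm_even: "tm (2*m) = tm m"
proof (cases "m = 0")
  case False
  then have "tm (2*m) = (tm m + 0) mod 2" by (subst tm.simps) simp
  then show ?thesis using tm_le1[of m] by simp
qed simp
lemma tm_odd: "tm (2*m+1) = 1 - tm m"
proof -
  have "tm m = 0 \<or> tm m = 1" using tm_le1[of m] by auto
  moreover have "tm (2*m+1) = (tm m + 1) mod 2" by (subst tm.simps) simp
  ultimately show ?thesis by auto
qed

definition dd :: "nat \<Rightarrow> nat" where "dd j = (tm (Suc j) + tm j) mod 2"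

lemma dd_even: "dd (2*j) = 1"
  unfolding dd_def using tm_odd[of j] tm_even[of j] tm_le1[of j] by auto
lemma dd_odd: "dd (2*j+1) = (if dd j = 1 then 0 else 1)"
proof -
  have "2*j+1+1 = 2*(Suc j)" by simp
  then have "tm (Suc (2*j+1)) = tm (Suc j)" using tm_even by (metis Suc_eq_plus1)
  moreover have "tm (2*j+1) = 1 - tm j" by (rule tm_odd)
  ultimately show ?thesis unfolding dd_def using tm_le1[of j] tm_le1[of "Suc j"]
    by (cases "tm j"; cases "tm (Suc j)") auto
qed

lemma subst_len: "length (subst_word xs) = 2 * length xs"
  by (induction xs) (auto simp: subst_word_def sigma_def)

lemma subst_nth: "j < length xs \<Longrightarrow>
  subst_word xs ! (2*j) = 1 \<and> subst_word xs ! (2*j+1) = (if xs ! j = 1 then 0 else 1)"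
proof (induction xs arbitrary: j)
  case Nil then show ?case by simp
next
  case (Cons a xs)
  have sw: "subst_word (a # xs) = sigma a @ subst_word xs" by (simp add: subst_word_def)
  show ?case
  proof (cases j)
    case 0 then show ?thesis by (simp add: sw sigma_def)
  next
    case (Suc i)
    then have "i < length xs" using Cons by simp
    have e1: "2*j = 2 + 2*i" and e2: "2*j+1 = 2 + (2*i+1)" using Suc by auto
    have ls: "length (sigma a) = 2" by (simp add: sigma_def)
    show ?thesis unfolding sw e1 e2 using Cons.IH[OF \<open>i < length xs\<close>] ls Suc
      by (simp add: nth_append)
  qed
qed

lemma iter_prop: "length ((subst_word ^^ n) [1]) = 2^n \<and>
   (\<forall>j < 2^n. (subst_word ^^ n) [1] ! j = dd j)"
proof (induction n)
  case 0
  have "dd 0 = 1" using dd_even[of 0] by simp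
  then show ?case by simp
next
  case (Suc n)
  let ?w = "(subst_word ^^ n) [1]"
  have len: "length (subst_word ?w) = 2^Suc n" using Suc subst_len by simp
  have "\<forall>j < 2^Suc n. subst_word ?w ! j = dd j"
  proof (intro allI impI)
    fix j :: nat assume j: "j < 2^Suc n"
    define i where "i = j div 2"
    have "j = 2*i \<or> j = 2*i+1" unfolding i_def by presburger
    moreover have "i < 2^n" using j calculation by auto
    ultimately show "subst_word ?w ! j = dd j"
      using subst_nth[of i ?w] Suc dd_even[of i] dd_odd[of i] by auto
  qed
  then show ?case using len by simp
qed

lemma Kinf_dd: "Kinf (Suc j) = dd j"
proof -
  have "j < 2^Suc j" using less_exp[of "Suc j"] by simp
  then show ?thesis unfolding Kinf_def using iter_prop[of "Suc j"] by simp
qed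

lemma tseq_tm: "tseq k = tm k"
proof (induction k)
  case 0 then show ?case by (simp add: tseq_def)
next
  case (Suc k)
  have "tseq (Suc k) = ((\<Sum>i=1..k. Kinf i) + Kinf (Suc k)) mod 2"
    unfolding tseq_def by simp
  also have "\<dots> = (tseq k + Kinf (Suc k)) mod 2" unfolding tseq_def by (simp add: mod_add_left_eq)
  also have "\<dots> = (tm k + (tm (Suc k) + tm k) mod 2) mod 2" using Suc by (simp add: Kinf_dd dd_def)
  also have "\<dots> = tm (Suc k)" using tm_le1[of k] tm_le1[of "Suc k"]
    by (cases "tm k"; cases "tm (Suc k)") auto
  finally show ?case .
qed

definition ee :: "nat \<Rightarrow> complex" where "ee m = of_int (1 - 2 * int (tm m))"

lemma ee_even: "ee (2*m) = ee m" by (simp add: ee_def tm_even)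
lemma ee_odd: "ee (2*m+1) = - ee m"
  using tm_le1[of m] tm_odd[of m] by (cases "tm m") (auto simp: ee_def)

lemma sum_split2: "(\<Sum>i<2*n. h i) = (\<Sum>i<n. h (2*i) + h (2*i+1))" for h :: "nat \<Rightarrow> complex"
  by (induction n) (simp_all add: algebra_simps)

lemma partial: "(\<Prod>n<N. 1 - z ^ (2^n)) = (\<Sum>m<2^N. ee m * z^m)"
proof (induction N arbitrary: z)
  case 0 then show ?case by (simp add: ee_def)
next
  case (Suc N)
  have "(\<Prod>n<Suc N. 1 - z ^ (2^n)) = (1 - z) * (\<Prod>n<N. 1 - (z^2) ^ (2^n))"
    by (subst prod.lessThan_Suc_shift) (simp add: power_mult[symmetric] mult.commute)
  also have "\<dots> = (1 - z) * (\<Sum>m<2^N. ee m * (z^2)^m)" using Suc by simp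
  also have "\<dots> = (\<Sum>m<2^N. ee (2*m) * z^(2*m) + ee (2*m+1) * z^(2*m+1))"
    unfolding sum_distrib_left
  proof (rule sum.cong)
    fix m
    show "(1 - z) * (ee m * (z^2)^m) = ee (2*m) * z^(2*m) + ee (2*m+1) * z^(2*m+1)"
    proof -
      have a: "z^(2*m) = (z^2)^m" by (simp add: power_mult)
      have b: "z^(2*m+1) = z * (z^2)^m" using a by simp
      show ?thesis unfolding ee_even ee_odd a b by (simp add: algebra_simps)
    qed
  qed simp
  also have "\<dots> = (\<Sum>m<2^Suc N. ee m * z^m)" by (simp add: sum_split2)
  finally show ?case .
qed

lemma ee_bound: "norm (ee m) \<le> 1"
  using tm_le1[of m] by (cases "tm m") (auto simp: ee_def)

lemma ser_summable: "norm z < 1 \<Longrightarrow> summable (\<lambda>m. ee m * z^m)"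
  by (rule summable_comparison_test[of _ "\<lambda>m. norm z ^ m"])
     (auto intro!: exI[of _ 0] simp: norm_mult norm_power ee_bound mult_left_le_one_le summable_geometric)

lemma prod_conv: "norm (z::complex) < 1 \<Longrightarrow> convergent_prod (\<lambda>n. 1 - z ^ (2^n))"
proof -
  assume z: "norm z < 1"
  have "summable (\<lambda>n. norm z ^ (2^n))"
  proof (rule summable_comparison_test[of _ "\<lambda>n. norm z ^ n"])
    show "\<exists>N. \<forall>n\<ge>N. norm (norm z ^ 2 ^ n) \<le> norm z ^ n"
      using z by (auto intro!: power_decreasing less_imp_le[OF less_exp])
    show "summable (\<lambda>n. norm z ^ n)" using z by (simp add: summable_geometric)
  qed
  then have "summable (\<lambda>n. norm ((1 - z ^ (2^n)) - 1))" by (simp add: norm_power)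
  then show ?thesis
    by (intro abs_convergent_prod_imp_convergent_prod summable_imp_abs_convergent_prod)
qed

lemma Xi_lim: "norm z < 1 \<Longrightarrow> (\<lambda>N. \<Prod>n<N. 1 - z ^ (2^n)) \<longlonglongrightarrow> Xi z"
  unfolding Xi_def using convergent_prod_LIMSEQ[OF prod_conv]
  by (simp add: LIMSEQ_lessThan_iff_atMost)

lemma Xi_sums: "norm z < 1 \<Longrightarrow> (\<lambda>m. ee m * z^m) sums Xi z"
proof -
  assume z: "norm z < 1"
  have "(\<lambda>n. \<Sum>m<n. ee m * z^m) \<longlonglongrightarrow> (\<Sum>m. ee m * z^m)"
    using ser_summable[OF z] summable_LIMSEQ by blast
  then have "((\<lambda>n. \<Sum>m<n. ee m * z^m) \<circ> (\<lambda>N. 2^N)) \<longlonglongrightarrow> (\<Sum>m. ee m * z^m)"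
    by (rule LIMSEQ_subseq_LIMSEQ) (simp add: strict_mono_def)
  then have "(\<lambda>N. \<Prod>n<N. 1 - z ^ (2^n)) \<longlonglongrightarrow> (\<Sum>m. ee m * z^m)"
    by (simp add: o_def partial)
  then have "Xi z = (\<Sum>m. ee m * z^m)" using Xi_lim[OF z] LIMSEQ_unique by blast
  then show ?thesis using ser_summable[OF z] summable_sums by simp
qed

theorem mainTheorem11:
  shows "(\<forall>z::complex. norm z < 1 \<longrightarrow>
            (\<lambda>k. of_int (epsseq (Suc k)) * z ^ Suc k) sums (Xi z - 1))
       \<and> (\<forall>z::complex. norm z < 1 \<longrightarrow> Xi z = (1 - z) * Xi (z ^ 2))
       \<and> complex_of_real tau_inf = 1 - Xi (1 / 2) / 2"
proof (intro conjI allI impI)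
  fix z :: complex assume z: "norm z < 1"
  have "(\<lambda>k. ee (Suc k) * z ^ Suc k) sums (Xi z - ee 0 * z^0)"
    using Xi_sums[OF z] sums_Suc_iff[of "\<lambda>m. ee m * z^m"] by simp
  moreover have "\<And>k. ee k = of_int (epsseq k)" by (simp add: ee_def epsseq_def tseq_tm)
  ultimately show "(\<lambda>k. of_int (epsseq (Suc k)) * z ^ Suc k) sums (Xi z - 1)"
    by (simp add: ee_def)
next
  fix z :: complex assume z: "norm z < 1"
  have z2: "norm (z^2) < 1" using z by (simp add: norm_power power_less_one_iff abs_square_less_1)
  have "(\<lambda>N. \<Prod>n<Suc N. 1 - z ^ (2^n)) \<longlonglongrightarrow> Xi z"
    using Xi_lim[OF z] by (rule LIMSEQ_Suc)
  moreover have "(\<lambda>N. \<Prod>n<Suc N. 1 - z ^ (2^n)) = (\<lambda>N. (1 - z) * (\<Prod>n<N. 1 - (z^2) ^ (2^n)))"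
    by (rule ext, subst prod.lessThan_Suc_shift) (simp add: power_mult[symmetric] mult.commute)
  ultimately have "(\<lambda>N. (1 - z) * (\<Prod>n<N. 1 - (z^2) ^ (2^n))) \<longlonglongrightarrow> Xi z" by simp
  moreover have "(\<lambda>N. (1 - z) * (\<Prod>n<N. 1 - (z^2) ^ (2^n))) \<longlonglongrightarrow> (1 - z) * Xi (z^2)"
    by (intro tendsto_intros Xi_lim[OF z2])
  ultimately show "Xi z = (1 - z) * Xi (z ^ 2)" using LIMSEQ_unique by blast
next
  have h: "norm (1/2 :: complex) < 1" by simp
  let ?r = "\<lambda>m. real (tm m) / 2^m"
  have g2: "summable (\<lambda>m. (1/2::real)^m)" by (rule summable_geometric) simp
  have bnd: "\<forall>m. norm (?r m) \<le> (1/2)^m"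
  proof
    fix m
    have "real (tm m) \<le> 1" using tm_le1[of m] by simp
    then show "norm (?r m) \<le> (1/2)^m" by (simp add: power_one_over divide_right_mono)
  qed
  have sr: "summable ?r"
  proof (rule summable_comparison_test[of _ "\<lambda>m. (1/2::real)^m"])
    show "\<exists>N. \<forall>n\<ge>N. norm (?r n) \<le> (1/2)^n" using bnd by blast
    show "summable (\<lambda>m. (1/2::real)^m)" by (rule g2)
  qed
  have tau: "tau_inf = suminf ?r"
    unfolding tau_inf_def tseq_tm using suminf_split_head[OF sr] by simp
  have geo: "(\<lambda>m. (1/2::real)^m) sums 2" using geometric_sums[of "1/2::real"] by simp
  have "(\<lambda>m. (1/2::real)^m - 2 * ?r m) sums (2 - 2 * tau_inf)"
    using sums_diff[OF geo sums_mult[OF summable_sums[OF sr], of 2]] tau by simp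
  then have "(\<lambda>m. complex_of_real ((1/2::real)^m - 2 * ?r m)) sums complex_of_real (2 - 2 * tau_inf)"
    by (rule sums_of_real_iff[THEN iffD2])
  moreover have "(\<lambda>m. complex_of_real ((1/2::real)^m - 2 * ?r m)) = (\<lambda>m. ee m * (1/2)^m)"
  proof (rule ext)
    fix m
    have "tm m = 0 \<or> tm m = 1" using tm_le1[of m] by auto
    then show "complex_of_real ((1/2::real)^m - 2 * ?r m) = ee m * (1/2)^m"
      by (auto simp: ee_def power_one_over)
  qed
  ultimately have "(\<lambda>m. ee m * (1/2)^m) sums complex_of_real (2 - 2 * tau_inf)" by simp
  then have "Xi (1/2) = complex_of_real (2 - 2 * tau_inf)"
    using Xi_sums[OF h] sums_unique2 by blast
  then show "complex_of_real tau_inf = 1 - Xi (1 / 2) / 2" by (simp add: diff_divide_distrib)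
qed

end
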